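(* Let $m,a,b,t\in\mathbb{N}$ with $m\geq 3$, $a\geq 1$, $t\in\{2,\ldots,m-1\}$ and $(t-1)(am+1)<bm+t<t(am+1)$, and let $S=\langle m,\ am+1,\ bm+t\rangle$ (a MANS-semigroup with embedding dimension $3$). Then $S$ is pseudo-symmetric if and only if $t=\frac{m+1}{2}$ and $t=\frac{b+1}{a}$.
   Context: $\mathbb{N}=\{0,1,2,\ldots\}$. $\langle A\rangle$ is the submonoid of $(\mathbb{N},+)$ generated by $A$; a numerical semigroup is a submonoid of $\mathbb{N}$ with finite complement. $\mathrm{F}(S)$ is the largest integer not in $S$. A numerical semigroup is irreducible if it cannot be expressed as the intersection of two numerical semigroups properly containing it; it is pseudo-symmetric if it is irreducible and $\mathrm{F}(S)$ is even. A MANS-semigroup is a numerical semigroup with $w(1)<\cdots<w(\mathrm{m}(S)-1)$, where $\mathrm{m}(S)$ is the least element of $S\setminus\{0\}$ and $w(i)$ the least element of $S$ congruent to $i$ modulo $\mathrm{m}(S)$. *)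

theory Defs
  imports Complex_Main
begin

inductive_set generated :: "nat set \<Rightarrow> nat set" for A :: "nat set" where
  gen_zero: "0 \<in> generated A"
| gen_add: "x \<in> A \<Longrightarrow> y \<in> generated A \<Longrightarrow> x + y \<in> generated A"

definition submonoid :: "nat set \<Rightarrow> bool" where
  "submonoid S \<longleftrightarrow> 0 \<in> S \<and> (\<forall>x\<in>S. \<forall>y\<in>S. x + y \<in> S)"

definition numerical_semigroup :: "nat set \<Rightarrow> bool" where
  "numerical_semigroup S \<longleftrightarrow> submonoid S \<and> finite (UNIV - S)"

definition frobenius :: "nat set \<Rightarrow> int" where
  "frobenius S = (if UNIV - S = {} then -1 else int (Max (UNIV - S)))"

definition irreducible_ns :: "nat set \<Rightarrow> bool" where
  "irreducible_ns S \<longleftrightarrow> numerical_semigroup S \<and>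
     \<not> (\<exists>T1 T2. numerical_semigroup T1 \<and> numerical_semigroup T2 \<and>
               S \<subset> T1 \<and> S \<subset> T2 \<and> S = T1 \<inter> T2)"

definition pseudo_symmetric :: "nat set \<Rightarrow> bool" where
  "pseudo_symmetric S \<longleftrightarrow> irreducible_ns S \<and> even (frobenius S)"

end

theory Submission
  imports Defs
begin


lemma gen3_iff: "x \<in> generated {p, q, r} \<longleftrightarrow> (\<exists>\<alpha> \<beta> \<gamma>. x = \<alpha>*p + \<beta>*q + \<gamma>*r)"
proof
  assume "x \<in> generated {p, q, r}"
  then show "\<exists>\<alpha> \<beta> \<gamma>. x = \<alpha>*p + \<beta>*q + \<gamma>*r"
  proof induction
    case gen_zero
    then show ?case by (rule exI[of _ 0], rule exI[of _ 0], rule exI[of _ 0]) simp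
  next
    case (gen_add x y)
    then obtain \<alpha> \<beta> \<gamma> where y: "y = \<alpha>*p + \<beta>*q + \<gamma>*r" by blast
    from gen_add(1) consider "x = p" | "x = q" | "x = r" by blast
    then show ?case
    proof cases
      case 1 then show ?thesis using y by (intro exI[of _ "Suc \<alpha>"] exI[of _ \<beta>] exI[of _ \<gamma>]) simp
    next
      case 2 then show ?thesis using y by (intro exI[of _ \<alpha>] exI[of _ "Suc \<beta>"] exI[of _ \<gamma>]) simp
    next
      case 3 then show ?thesis using y by (intro exI[of _ \<alpha>] exI[of _ \<beta>] exI[of _ "Suc \<gamma>"]) simp
    qed
  qed
next
  assume "\<exists>\<alpha> \<beta> \<gamma>. x = \<alpha>*p + \<beta>*q + \<gamma>*r"
  then obtain \<alpha> \<beta> \<gamma> where x: "x = \<alpha>*p + \<beta>*q + \<gamma>*r" by blast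
  have r: "\<gamma>*r \<in> generated {p,q,r}"
    by (induction \<gamma>) (auto intro: generated.intros)
  have q: "\<beta>*q + \<gamma>*r \<in> generated {p,q,r}"
    using r by (induction \<beta>) (auto simp: add.assoc intro: generated.intros)
  have "\<alpha>*p + \<beta>*q + \<gamma>*r \<in> generated {p,q,r}"
    using q by (induction \<alpha>) (auto simp: add.assoc intro: generated.intros)
  then show "x \<in> generated {p,q,r}" using x by simp
qed

lemma irr_char:
  fixes S :: "nat set" and F :: nat
  assumes ns: "numerical_semigroup S" and FS: "F \<notin> S" and Fmax: "\<And>x. x \<notin> S \<Longrightarrow> x \<le> F"
  shows "irreducible_ns S \<longleftrightarrow> (\<forall>x. x \<notin> S \<longrightarrow> 2*x \<noteq> F \<longrightarrow> F - x \<in> S)"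
proof
  have z: "0 \<in> S" and add: "\<And>x y. x \<in> S \<Longrightarrow> y \<in> S \<Longrightarrow> x + y \<in> S"
    using ns by (auto simp: numerical_semigroup_def submonoid_def)
  have big: "\<And>y. y > F \<Longrightarrow> y \<in> S" using Fmax by force
  have fin: "finite (UNIV - S)" using ns by (simp add: numerical_semigroup_def)
  assume irr: "irreducible_ns S"
  show "\<forall>x. x \<notin> S \<longrightarrow> 2*x \<noteq> F \<longrightarrow> F - x \<in> S"
  proof (rule ccontr)
    assume neg: "\<not> (\<forall>x. x \<notin> S \<longrightarrow> 2*x \<noteq> F \<longrightarrow> F - x \<in> S)"
    define G where "G = {x. x \<notin> S \<and> 2*x \<noteq> F \<and> F - x \<notin> S}"
    have Gne: "G \<noteq> {}" using neg by (auto simp: G_def)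
    have Gfin: "finite G" using fin by (rule finite_subset[rotated]) (auto simp: G_def)
    define h where "h = Max G"
    have hG: "h \<in> G" using Gne Gfin by (simp add: h_def)
    have hmax: "\<And>y. y \<in> G \<Longrightarrow> y \<le> h" using Gfin by (simp add: h_def)
    have hF: "h \<le> F" using hG Fmax by (auto simp: G_def)
    have "F - h \<in> G" using hG hF by (auto simp: G_def)
    then have "F - h \<le> h" by (rule hmax)
    then have h2: "2*h > F" using hG by (auto simp: G_def)
    have hneF: "h \<noteq> F" using hG z by (auto simp: G_def)
    have hs: "h + s \<in> S" if "s \<in> S" "s > 0" for s
    proof (rule ccontr)
      assume hsn: "h + s \<notin> S"
      then have "h + s \<le> F" using Fmax by blast
      have "F - (h + s) \<notin> S"
      proof
        assume "F - (h + s) \<in> S"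
        then have "F - (h+s) + s \<in> S" using add that(1) by blast
        moreover have "F - (h+s) + s = F - h" using \<open>h + s \<le> F\<close> by simp
        ultimately show False using hG by (auto simp: G_def)
      qed
      then have "h + s \<in> G" using hsn h2 by (auto simp: G_def)
      then show False using hmax that(2) by fastforce
    qed
    define T1 where "T1 = insert F S"
    define T2 where "T2 = insert h S"
    have ns1: "numerical_semigroup T1"
      unfolding numerical_semigroup_def submonoid_def T1_def
    proof (intro conjI ballI)
      show "finite (UNIV - insert F S)" using fin by (rule finite_subset[rotated]) auto
      fix x y assume "x \<in> insert F S" "y \<in> insert F S"
      then show "x + y \<in> insert F S"
      proof (cases "x \<in> S \<and> y \<in> S")
        case True then show ?thesis using add by blast
      next
        case False
        then have "x = F \<or> y = F" using \<open>x \<in> insert F S\<close> \<open>y \<in> insert F S\<close> by blast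
        then show ?thesis using big by (cases "x = 0"; cases "y = 0") auto
      qed
    qed (use z in auto)
    have ns2: "numerical_semigroup T2"
      unfolding numerical_semigroup_def submonoid_def T2_def
    proof (intro conjI ballI)
      show "finite (UNIV - insert h S)" using fin by (rule finite_subset[rotated]) auto
      fix x y assume xy: "x \<in> insert h S" "y \<in> insert h S"
      show "x + y \<in> insert h S"
      proof (cases "x = h")
        case True
        then show ?thesis using xy hs h2 big
          by (cases "y = 0") (auto simp: mult_2)
      next
        case False
        then have "x \<in> S" using xy by auto
        then show ?thesis using xy hs add
          by (cases "x = 0") (auto simp: add.commute)
      qed
    qed (use z in auto)
    have "S \<subset> T1" "S \<subset> T2" "S = T1 \<inter> T2"
      using FS hG hneF by (auto simp: T1_def T2_def G_def)
    then show False using irr ns1 ns2 unfolding irreducible_ns_def by blast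
  qed
next
  assume P: "\<forall>x. x \<notin> S \<longrightarrow> 2*x \<noteq> F \<longrightarrow> F - x \<in> S"
  have key: False if T: "numerical_semigroup T" "S \<subset> T" "F \<notin> T" for T
  proof -
    have addT: "\<And>x y. x \<in> T \<Longrightarrow> y \<in> T \<Longrightarrow> x + y \<in> T"
      using T(1) by (auto simp: numerical_semigroup_def submonoid_def)
    obtain x where x: "x \<in> T" "x \<notin> S" using T(2) by blast
    have "x \<le> F" using Fmax x by blast
    show False
    proof (cases "2*x = F")
      case True
      then show ?thesis using addT[OF x(1) x(1)] T(3) by (simp add: mult_2)
    next
      case False
      then have "F - x \<in> T" using P x T(2) by blast
      then have "x + (F - x) \<in> T" using addT x by blast
      then show ?thesis using \<open>x \<le> F\<close> T(3) by simp
    qed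
  qed
  show "irreducible_ns S"
    unfolding irreducible_ns_def
  proof (intro conjI notI)
    show "numerical_semigroup S" by (rule ns)
  next
    assume "\<exists>T1 T2. numerical_semigroup T1 \<and> numerical_semigroup T2 \<and> S \<subset> T1 \<and> S \<subset> T2 \<and> S = T1 \<inter> T2"
    then obtain T1 T2 where T: "numerical_semigroup T1" "numerical_semigroup T2" "S \<subset> T1" "S \<subset> T2" "S = T1 \<inter> T2" by blast
    then have "F \<notin> T1 \<or> F \<notin> T2" using FS by blast
    then show False using key T by blast
  qed
qed



locale M3 =
  fixes m a b t :: nat
  assumes m3: "m \<ge> 3" and a1: "a \<ge> 1" and t2: "2 \<le> t" and tm: "t \<le> m - 1"
    and lo: "(t - 1) * (a * m + 1) < b * m + t" and hi: "b * m + t < t * (a * m + 1)"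
begin

definition n1 where "n1 = a * m + 1"
definition n2 where "n2 = b * m + t"
definition g :: "nat \<Rightarrow> nat" where "g i = (i div t) * n2 + (i mod t) * n1"
definition S where "S = generated {m, n1, n2}"

lemma lo': "(t - 1) * n1 < n2" using lo by (simp add: n1_def n2_def)
lemma hi': "n2 < t * n1" using hi by (simp add: n1_def n2_def)

lemma g_qr: "r < t \<Longrightarrow> g (q * t + r) = q * n2 + r * n1"
  using t2 by (simp add: g_def)

lemma g_Suc: "g i < g (Suc i)"
proof -
  define q r where "q = i div t" and "r = i mod t"
  have i: "i = q * t + r" and r: "r < t" using t2 by (auto simp: q_def r_def)
  show ?thesis
  proof (cases "r = t - 1")
    case True
    then have "Suc i = Suc q * t + 0" using i t2 by simp
    then have "g (Suc i) = Suc q * n2" using g_qr[of 0 "Suc q"] t2 by simp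
    moreover have "g i = q * n2 + (t - 1) * n1" using g_qr[OF r, of q] i True by simp
    ultimately show ?thesis using lo' by simp
  next
    case False
    then have "Suc i = q * t + Suc r" "Suc r < t" using i r by auto
    then show ?thesis using g_qr[OF r, of q] g_qr[of "Suc r" q] i a1 by (simp add: n1_def)
  qed
qed

lemma g_strict: "i < j \<Longrightarrow> g i < g j"
  using g_Suc by (metis lift_Suc_mono_less)
lemma g_mono: "i \<le> j \<Longrightarrow> g i \<le> g j"
  using g_strict by (metis le_less)

lemma g_eq: "g i = m * ((i div t) * b + (i mod t) * a) + i"
proof -
  have "g i = m * ((i div t) * b + (i mod t) * a) + ((i div t) * t + i mod t)"
    by (simp add: g_def n1_def n2_def algebra_simps)
  then show ?thesis by simp
qed

lemma g_mod: "i < m \<Longrightarrow> g i mod m = i"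
  by (simp add: g_eq)

lemma g_in: "g i \<in> S"
  unfolding S_def gen3_iff g_def
  by (rule exI[of _ 0], rule exI[of _ "i mod t"], rule exI[of _ "i div t"]) simp

lemma m0: "m > 0" using m3 by simp

lemma mem: "x \<in> S \<longleftrightarrow> g (x mod m) \<le> x"
proof
  assume "x \<in> S"
  then obtain \<alpha> \<beta> \<gamma> where x: "x = \<alpha>*m + \<beta>*n1 + \<gamma>*n2"
    unfolding S_def gen3_iff by blast
  define s where "s = \<beta> + \<gamma>*t"
  have xe: "x = m*(\<alpha> + \<beta>*a + \<gamma>*b) + s"
    unfolding x s_def n1_def n2_def by (simp add: algebra_simps)
  have "s = (\<gamma> + \<beta> div t) * t + \<beta> mod t"
    unfolding s_def by (simp add: algebra_simps)
  then have gs: "g s = (\<gamma> + \<beta> div t) * n2 + (\<beta> mod t) * n1"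
    using g_qr[of "\<beta> mod t" "\<gamma> + \<beta> div t"] t2 by simp
  have b1: "\<beta> * n1 = (\<beta> div t) * (t * n1) + (\<beta> mod t) * n1"
    by (metis (no_types, lifting) div_mult_mod_eq distrib_right mult.assoc)
  have "(\<beta> div t) * n2 \<le> (\<beta> div t) * (t * n1)" using hi' by simp
  then have "g s \<le> \<beta>*n1 + \<gamma>*n2" using gs b1 by (simp add: algebra_simps)
  moreover have "g (s mod m) \<le> g s" by (rule g_mono) simp
  moreover have "x mod m = s mod m" using xe by simp
  ultimately show "g (x mod m) \<le> x" using x by simp
next
  assume le: "g (x mod m) \<le> x"
  define i where "i = x mod m"
  define K where "K = (i div t) * b + (i mod t) * a"
  have gi: "g i = m * K + i" unfolding K_def by (rule g_eq)
  have xi: "x = m * (x div m) + i" unfolding i_def by simp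
  have le': "g i \<le> x" using le i_def by simp
  have "m * K \<le> m * (x div m)" using le' gi xi by linarith
  then have "K \<le> x div m" using m0 by simp
  then obtain d where d: "x div m = K + d" using le_Suc_ex by blast
  have "x = g i + d * m" using xi gi d by (simp add: algebra_simps)
  then have "x = d * m + (i mod t) * n1 + (i div t) * n2"
    by (simp add: g_def algebra_simps)
  then show "x \<in> S" unfolding S_def gen3_iff by blast
qed

definition K :: "nat \<Rightarrow> nat" where "K i = (i div t) * b + (i mod t) * a"

lemma gK: "g i = m * K i + i" unfolding K_def by (rule g_eq)

lemma memK: "r < m \<Longrightarrow> m * q + r \<in> S \<longleftrightarrow> K r \<le> q"
proof -
  assume r: "r < m"
  have "(m * q + r) mod m = r" "(m*q+r) div m = q" using r by auto
  then have "m * q + r \<in> S \<longleftrightarrow> m * K r + r \<le> m * q + r" using mem gK by simp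
  also have "\<dots> \<longleftrightarrow> K r \<le> q" using m0 by simp
  finally show ?thesis .
qed

lemma b_lo: "(t - 1) * a \<le> b"
proof (rule ccontr)
  assume "\<not> ?thesis"
  then have "(b + 1) * m \<le> ((t - 1) * a) * m" by (intro mult_le_mono1) simp
  then have "b * m + m \<le> (t - 1) * a * m" by (simp add: algebra_simps)
  moreover have "(t - 1) * (a * m + 1) = (t - 1) * a * m + (t - 1)" by (simp add: algebra_simps)
  ultimately show False using lo tm by linarith
qed

lemma b_hi: "b < t * a"
proof -
  have "t * (a * m + 1) = (t * a) * m + t" by (simp add: algebra_simps)
  then have "b * m < (t * a) * m" using hi by linarith
  then show ?thesis by (simp add: mult_less_cancel2)
qed

lemma K_qr: "r < t \<Longrightarrow> K (q * t + r) = q * b + r * a"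
  using t2 by (simp add: K_def)

lemma K_Suc: "K i \<le> K (Suc i)"
proof -
  define q r where "q = i div t" and "r = i mod t"
  have i: "i = q * t + r" and r: "r < t" using t2 by (auto simp: q_def r_def)
  show ?thesis
  proof (cases "r = t - 1")
    case True
    then have "Suc i = Suc q * t + 0" using i t2 by simp
    then have "K (Suc i) = Suc q * b" using K_qr[of 0 "Suc q"] t2 by simp
    moreover have "K i = q * b + (t - 1) * a" using K_qr[OF r, of q] i True by simp
    ultimately show ?thesis using b_lo by simp
  next
    case False
    then have "Suc i = q * t + Suc r" "Suc r < t" using i r by auto
    then show ?thesis using K_qr[OF r, of q] K_qr[of "Suc r" q] i by simp
  qed
qed

lemma K_mono: "i \<le> j \<Longrightarrow> K i \<le> K j"
  using K_Suc by (rule lift_Suc_mono_le)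

lemma K0: "K 0 = 0" by (simp add: K_def)
lemma K1: "K 1 = a" using t2 by (simp add: K_def)
lemma K_pos: "i \<ge> 1 \<Longrightarrow> K i \<ge> 1" using K_mono[of 1 i] K1 a1 by simp

definition KM where "KM = K (m - 1)"
definition F0 where "F0 = m * (KM - 1) + (m - 1)"

lemma KM_pos: "KM \<ge> 1" unfolding KM_def using K_pos m3 by simp

lemma F0_notin: "F0 \<notin> S"
  unfolding F0_def using memK[of "m - 1" "KM - 1"] KM_pos m3 by (simp add: KM_def)

lemma gap_le: "x \<notin> S \<Longrightarrow> x \<le> F0"
proof -
  assume x: "x \<notin> S"
  define q r where "q = x div m" and "r = x mod m"
  have xe: "x = m * q + r" and r: "r < m" using m0 by (auto simp: q_def r_def)
  have "q < K r" using memK[OF r, of q] x xe by simp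
  moreover have "K r \<le> KM" unfolding KM_def using r by (intro K_mono) simp
  ultimately have "q \<le> KM - 1" by simp
  then have "m * q \<le> m * (KM - 1)" by simp
  then show "x \<le> F0" unfolding F0_def using xe r by linarith
qed

lemma S_ns: "numerical_semigroup S"
  unfolding numerical_semigroup_def submonoid_def
proof (intro conjI ballI)
  show "0 \<in> S" unfolding S_def by (rule generated.gen_zero)
  show "finite (UNIV - S)"
    by (rule finite_subset[of _ "{..F0}"]) (auto intro: gap_le)
  fix x y assume "x \<in> S" "y \<in> S"
  then obtain a1 b1 c1 a2 b2 c2 where "x = a1*m + b1*n1 + c1*n2" "y = a2*m + b2*n1 + c2*n2"
    unfolding S_def gen3_iff by blast
  then have "x + y = (a1+a2)*m + (b1+b2)*n1 + (c1+c2)*n2" by (simp add: algebra_simps)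
  then show "x + y \<in> S" unfolding S_def gen3_iff by blast
qed

lemma frob: "frobenius S = int F0"
proof -
  have ne: "UNIV - S \<noteq> {}" using F0_notin by blast
  have "Max (UNIV - S) = F0"
    by (rule Max_eqI) (use S_ns F0_notin gap_le in \<open>auto simp: numerical_semigroup_def\<close>)
  then show ?thesis using ne by (simp add: frobenius_def)
qed

lemma ps_iff: "pseudo_symmetric S \<longleftrightarrow> even F0 \<and> (\<forall>x. x \<notin> S \<longrightarrow> 2*x \<noteq> F0 \<longrightarrow> F0 - x \<in> S)"
  unfolding pseudo_symmetric_def frob using irr_char[OF S_ns F0_notin gap_le] by auto

lemma F0_sub: "r < m \<Longrightarrow> q \<le> KM - 1 \<Longrightarrow> F0 - (m * q + r) = m * (KM - 1 - q) + (m - 1 - r)"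
proof -
  assume r: "r < m" and q: "q \<le> KM - 1"
  obtain d where d: "KM - 1 = q + d" using q le_Suc_ex by blast
  have "F0 = m * q + m * d + (m - 1)" unfolding F0_def d by (simp add: algebra_simps)
  then show ?thesis using d r by simp
qed

lemma lin_uniq:
  fixes u v i :: nat
  assumes "m * u + 2 * i = m * v + (m - 1)" "i < m"
  shows "u = v \<and> 2 * i = m - 1"
proof -
  have "\<not> u > v"
  proof
    assume "u > v"
    then have "m * (v + 1) \<le> m * u" by (intro mult_le_mono2) simp
    then show False using assms m0 by (simp add: algebra_simps)
  qed
  moreover have "\<not> u < v"
  proof
    assume "u < v"
    then have "m * (u + 1) \<le> m * v" by (intro mult_le_mono2) simp
    then show False using assms m0 by (simp add: algebra_simps)
  qed
  ultimately have "u = v" by simp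
  then show ?thesis using assms by simp
qed

lemma Pexc:
  assumes P: "\<forall>x. x \<notin> S \<longrightarrow> 2*x \<noteq> F0 \<longrightarrow> F0 - x \<in> S"
    and i: "1 \<le> i" "i < m" and exc: "K i + K (m - 1 - i) > KM"
  shows "2 * i = m - 1 \<and> 2 * K i = KM + 1"
proof -
  define x where "x = m * (K i - 1) + i"
  have Ki: "K i \<ge> 1" using K_pos i by simp
  have KiM: "K i \<le> KM" unfolding KM_def using i by (intro K_mono) simp
  have xn: "x \<notin> S" unfolding x_def using memK[OF i(2), of "K i - 1"] Ki by simp
  have Fx: "F0 - x = m * (KM - K i) + (m - 1 - i)"
    unfolding x_def using F0_sub[OF i(2), of "K i - 1"] Ki KiM by simp
  have "F0 - x \<notin> S"
    unfolding Fx using memK[of "m - 1 - i" "KM - K i"] i exc KiM by simp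
  then have "2 * x = F0" using P xn by blast
  then have "m * (2 * (K i - 1)) + 2 * i = m * (KM - 1) + (m - 1)"
    unfolding x_def F0_def by (simp add: algebra_simps)
  from lin_uniq[OF this i(2)] show ?thesis using Ki KM_pos by arith
qed

lemma Psuff:
  assumes H: "\<And>i. 1 \<le> i \<Longrightarrow> i < m \<Longrightarrow>
      K i + K (m - 1 - i) \<le> KM \<or> (2 * i = m - 1 \<and> 2 * K i = KM + 1)"
  shows "\<forall>x. x \<notin> S \<longrightarrow> 2*x \<noteq> F0 \<longrightarrow> F0 - x \<in> S"
proof (intro allI impI)
  fix x assume xn: "x \<notin> S" and x2: "2 * x \<noteq> F0"
  define q r where "q = x div m" and "r = x mod m"
  have xe: "x = m * q + r" and r: "r < m" using m0 by (auto simp: q_def r_def)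
  have qK: "q < K r" using memK[OF r, of q] xn xe by simp
  then have r1: "1 \<le> r" using K0 by (cases r) auto
  have KrM: "K r \<le> KM" unfolding KM_def using r by (intro K_mono) simp
  have Fx: "F0 - x = m * (KM - 1 - q) + (m - 1 - r)"
    unfolding xe using F0_sub[OF r, of q] qK KrM by simp
  have mr: "m - 1 - r < m" using m0 by simp
  from H[OF r1 r] show "F0 - x \<in> S"
  proof
    assume "K r + K (m - 1 - r) \<le> KM"
    then show ?thesis unfolding Fx using memK[OF mr, of "KM - 1 - q"] qK by simp
  next
    assume e: "2 * r = m - 1 \<and> 2 * K r = KM + 1"
    then have jr: "m - 1 - r = r" by arith
    have "q \<noteq> K r - 1"
    proof
      assume "q = K r - 1"
      then have "2 * x = m * (2 * K r - 2) + 2 * r" unfolding xe by (simp add: algebra_simps)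
      also have "\<dots> = F0" unfolding F0_def using e by simp
      finally show False using x2 by simp
    qed
    then have "K r \<le> KM - 1 - q" using qK e by arith
    then show ?thesis unfolding Fx jr using memK[OF r, of "KM - 1 - q"] qK e by simp
  qed
qed

lemma suff_dir:
  assumes c1: "2 * t = m + 1" and c2: "t * a = b + 1"
  shows "pseudo_symmetric S"
proof -
  obtain s where ts: "t = Suc (Suc s)" using t2 by (metis add_2_eq_Suc le_Suc_ex)
  have me: "m = 2 * s + 3" using c1 ts by simp
  have be: "b + 1 = (s + 2) * a" using c2 ts by simp
  have "m - 1 = 1 * t + s" using me ts by simp
  then have KMe: "KM = b + s * a" unfolding KM_def using K_qr[of s 1] ts by simp
  have "KM + 1 = 2 * ((s + 1) * a)" using KMe be by (simp add: algebra_simps)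
  then have "even (KM - 1)" by (metis add_diff_cancel_right' diff_diff_left dvd_diff_nat
      even_add mult_2 nat_1_add_1 odd_one dvd_triv_left)
  moreover have "even (m - 1)" using me by simp
  ultimately have ev: "even F0" unfolding F0_def by simp
  have H: "K i + K (m - 1 - i) \<le> KM \<or> (2 * i = m - 1 \<and> 2 * K i = KM + 1)"
    if i: "1 \<le> i" "i < m" for i
  proof -
    consider "i \<le> s" | "i = s + 1" | "i \<ge> s + 2" by linarith
    then show ?thesis
    proof cases
      case 1
      have "K i = i * a" using K_qr[of i 0] ts 1 by simp
      moreover have "m - 1 - i = 1 * t + (s - i)" using me ts 1 by simp
      then have "K (m - 1 - i) = b + (s - i) * a" using K_qr[of "s - i" 1] ts by simp
      ultimately have "K i + K (m - 1 - i) = b + (i + (s - i)) * a" by (simp add: algebra_simps)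
      then show ?thesis using 1 KMe by simp
    next
      case 2
      have Ki: "K i = (s + 1) * a" using K_qr[of i 0] ts 2 by simp
      have "2 * K i = KM + 1" using Ki KMe be by (simp add: algebra_simps)
      then show ?thesis using 2 me by simp
    next
      case 3
      have "i = 1 * t + (i - s - 2)" "i - s - 2 < t" using 3 ts i me by auto
      then have Ki: "K i = b + (i - s - 2) * a" using K_qr[of "i - s - 2" 1] by simp
      have "m - 1 - i = 0 * t + (m - 1 - i)" "m - 1 - i < t" using me ts 3 by auto
      then have Kj: "K (m - 1 - i) = (m - 1 - i) * a" using K_qr[of "m - 1 - i" 0] by simp
      have "(i - s - 2) + (m - 1 - i) = s" using me 3 i by simp
      then have "K i + K (m - 1 - i) = b + s * a" unfolding Ki Kj
        by (metis add.assoc add_mult_distrib)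
      then show ?thesis using KMe by simp
    qed
  qed
  show ?thesis using ps_iff ev Psuff[OF H] by blast
qed

lemma nec_dir:
  assumes ps: "pseudo_symmetric S"
  shows "2 * t = m + 1 \<and> t * a = b + 1"
proof -
  have ev: "even F0" and P: "\<forall>x. x \<notin> S \<longrightarrow> 2*x \<noteq> F0 \<longrightarrow> F0 - x \<in> S"
    using ps ps_iff by auto
  define Q R where "Q = (m - 1) div t" and "R = (m - 1) mod t"
  have mQR: "m - 1 = Q * t + R" and Rt: "R < t" using t2 by (auto simp: Q_def R_def)
  have Q1: "Q \<ge> 1" using tm t2 unfolding Q_def by (simp add: Suc_le_eq div_greater_zero_iff)
  have KMe: "KM = Q * b + R * a" unfolding KM_def mQR using K_qr[OF Rt] by simp
  show ?thesis
  proof (cases "R = t - 1")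
    case True
    have m: "m = (Q + 1) * t" using mQR True m3 t2 by (simp add: algebra_simps)
    have "odd F0"
    proof (cases "even m")
      case True
      then have "odd (m - 1)" using m3 by simp
      moreover have "even (m * (KM - 1))" using True by simp
      ultimately show ?thesis unfolding F0_def by simp
    next
      case False
      then have "odd (Q + 1)" "odd t" unfolding m by auto
      then have "even Q" "even (t - 1)" using t2 by auto
      then have "even KM" unfolding KMe using \<open>R = t - 1\<close> by simp
      then have "odd (KM - 1)" using KM_pos by simp
      then have "odd (m * (KM - 1))" using False by simp
      moreover have "even (m - 1)" using False m3 by simp
      ultimately show ?thesis unfolding F0_def by simp
    qed
    then show ?thesis using ev by simp
  next
    case False
    then have R2: "R + 2 \<le> t" using Rt by simp
    define i where "i = R + 1"
    have i1: "1 \<le> i" and im: "i < m" using R2 tm m3 by (auto simp: i_def)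
    obtain Q' where Q': "Q = Suc Q'" using Q1 by (cases Q) auto
    have Ki: "K i = (R + 1) * a" using K_qr[of i 0] R2 by (simp add: i_def)
    have "m - 1 - i = Q' * t + (t - 1)" using mQR Q' R2 by (simp add: i_def algebra_simps)
    then have Kj: "K (m - 1 - i) = Q' * b + (t - 1) * a" using K_qr[of "t - 1" Q'] t2 by simp
    have ta: "t * a = (t - 1) * a + a" using t2 by (cases t) auto
    have "K i + K (m - 1 - i) > KM" unfolding Ki Kj KMe Q' using b_hi ta
      by (simp add: algebra_simps)
    from Pexc[OF P i1 im this] have e1: "2 * i = m - 1" and e2: "2 * K i = KM + 1" by auto
    have "Q * t = R + 2" using e1 mQR by (simp add: i_def)
    then have "Q * t \<le> 1 * t" using R2 by simp
    then have "Q \<le> 1" using t2 by simp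
    then have "Q = 1" using Q1 by simp
    then have Rv: "R = t - 2" using \<open>Q * t = R + 2\<close> by simp
    have c1: "2 * t = m + 1" using e1 Rv t2 m3 by (simp add: i_def)
    obtain s where ts: "t = Suc (Suc s)" using t2 by (metis add_2_eq_Suc le_Suc_ex)
    have "2 * ((s + 1) * a) = b + s * a + 1" using e2 Ki KMe Rv \<open>Q = 1\<close> ts by simp
    then have "t * a = b + 1" using ts by (simp add: algebra_simps)
    then show ?thesis using c1 by simp
  qed
qed

lemma main: "pseudo_symmetric S \<longleftrightarrow> (2 * t = m + 1 \<and> t * a = b + 1)"
  using nec_dir suff_dir by blast

end

theorem proposition3p25:
  fixes m a b t :: nat
  assumes "m \<ge> 3" and "a \<ge> 1" and "2 \<le> t" and "t \<le> m - 1"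
    and "(t - 1) * (a * m + 1) < b * m + t" and "b * m + t < t * (a * m + 1)"
  shows "pseudo_symmetric (generated {m, a * m + 1, b * m + t}) \<longleftrightarrow>
         (real t = (real m + 1) / 2 \<and> real t = (real b + 1) / real a)"
proof -
  interpret M: M3 m a b t using assms by unfold_locales
  have e: "generated {m, a * m + 1, b * m + t} = M.S"
    by (simp add: M.S_def M.n1_def M.n2_def)
  have "real t = (real m + 1) / 2 \<longleftrightarrow> real (2 * t) = real (m + 1)" by (simp add: field_simps)
  also have "\<dots> \<longleftrightarrow> 2 * t = m + 1" by (rule of_nat_eq_iff)
  finally have c1: "real t = (real m + 1) / 2 \<longleftrightarrow> 2 * t = m + 1" .
  have ap: "real a > 0" using assms(2) by simp
  have "real t = (real b + 1) / real a \<longleftrightarrow> real t * real a = real b + 1"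
    using ap by (simp add: field_simps)
  also have "\<dots> \<longleftrightarrow> t * a = b + 1" by (metis of_nat_1 of_nat_add of_nat_eq_iff of_nat_mult)
  finally show ?thesis unfolding e M.main c1 by simp
qed

end
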